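(* Let $F\subseteq\mathcal{U}$ be the set of elements revealed in the first stage, and suppose the Simple algorithm with input a set $J\subset\mathbb{Z}$ is run on the elements of $\mathcal{U}\setminus F$ as they are revealed. Then it returns an independent set $P\subseteq\mathcal{U}\setminus F$ such that $$\mathrm{OPT}(P)\ \ge\ \sum_{j\in J}2^j\cdot\Big(\mathrm{rank}\big(B_{\mathcal{U}\setminus F}(J\setminus\{j\})\cup B_{\mathcal{U}\setminus F}(j)\big)-\mathrm{rank}\big(B_{\mathcal{U}\setminus F}(J\setminus\{j\})\big)\Big).$$
   Context: $M=(\mathcal{U},\mathcal{I})$ is a matroid with $n=|\mathcal{U}|$; $\mathrm{rank}(X)=\max\{|X'|:X'\subseteq X,X'\in\mathcal{I}\}$, $\mathrm{span}(X)=\{e:\mathrm{rank}(X\cup\{e\})=\mathrm{rank}(X)\}$, and $\mathrm{OPT}(X)=\max\{\sum_{e\in X'}\mathrm{val}(e):X'\subseteq X,X'\in\mathcal{I}\}$. Standing assumption: elements of rank $0$ have value $0$, and every element of positive value has value $2^i$ for some $i\in\mathbb{Z}$. For $X\subseteq\mathcal{U}$, $B_X(i)=\{e\in X:\mathrm{val}(e)=2^i\}$, $B_X(I)=\bigcup_{i\in I}B_X(i)$. Logarithms base 2. Setting: the elements of $\mathcal{U}$ are revealed one by one in uniformly random order; $W$ is the number of successes in $n$ independent fair Bernoulli trials, and $F$ is the set of the first $W$ revealed elements (none of which is selected); afterwards the elements of $\mathcal{U}\setminus F$ are revealed one by one. Simple algorithm with input $J$: start with $P=\emptyset$; immediately after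 each element $e\in\mathcal{U}\setminus F$ is revealed, if $\mathrm{val}(e)>0$, $\log\mathrm{val}(e)\in J$ and $e\notin\mathrm{span}(P)$, add $e$ to $P$. Output $P$. *)

theory Defs
  imports Complex_Main
begin

definition matroid :: "'a set \<Rightarrow> 'a set set \<Rightarrow> bool" where
  "matroid U Ind \<longleftrightarrow> finite U \<and> Ind \<subseteq> Pow U \<and> {} \<in> Ind
     \<and> (\<forall>X Y. X \<in> Ind \<and> Y \<subseteq> X \<longrightarrow> Y \<in> Ind)
     \<and> (\<forall>X Y. X \<in> Ind \<and> Y \<in> Ind \<and> card X < card Y \<longrightarrow> (\<exists>e\<in>Y - X. insert e X \<in> Ind))"

definition mrank :: "'a set set \<Rightarrow> 'a set \<Rightarrow> nat" where
  "mrank Ind X = Max {card Y | Y. Y \<subseteq> X \<and> Y \<in> Ind}"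

definition mspan :: "'a set set \<Rightarrow> 'a set \<Rightarrow> 'a set" where
  "mspan Ind X = {e. mrank Ind (insert e X) = mrank Ind X}"

definition OPT :: "'a set set \<Rightarrow> ('a \<Rightarrow> real) \<Rightarrow> 'a set \<Rightarrow> real" where
  "OPT Ind val X = Max {sum val Y | Y. Y \<subseteq> X \<and> Y \<in> Ind}"

definition bucket :: "('a \<Rightarrow> real) \<Rightarrow> 'a set \<Rightarrow> int \<Rightarrow> 'a set" where
  "bucket val X i = {e \<in> X. val e = 2 powr (real_of_int i)}"

definition buckets :: "('a \<Rightarrow> real) \<Rightarrow> 'a set \<Rightarrow> int set \<Rightarrow> 'a set" where
  "buckets val X I = (\<Union>i\<in>I. bucket val X i)"

text \<open>Simple algorithm with input J, run on the revealed sequence xs (the elements of U - F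
  in order of revelation).\<close>
definition simple_step :: "'a set set \<Rightarrow> ('a \<Rightarrow> real) \<Rightarrow> int set \<Rightarrow> 'a set \<Rightarrow> 'a \<Rightarrow> 'a set" where
  "simple_step Ind val J P e =
     (if val e > 0 \<and> log 2 (val e) \<in> real_of_int ` J \<and> e \<notin> mspan Ind P then insert e P else P)"

definition simple_alg :: "'a set set \<Rightarrow> ('a \<Rightarrow> real) \<Rightarrow> int set \<Rightarrow> 'a list \<Rightarrow> 'a set" where
  "simple_alg Ind val J xs = foldl (simple_step Ind val J) {} xs"

end

theory Submission
  imports Defs
begin

lemma matD: assumes "matroid U Ind"
  shows "finite U" "Ind \<subseteq> Pow U" "{} \<in> Ind"
    "\<forall>X Y. X \<in> Ind \<and> Y \<subseteq> X \<longrightarrow> Y \<in> Ind"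
    "\<forall>X Y. X \<in> Ind \<and> Y \<in> Ind \<and> card X < card Y \<longrightarrow> (\<exists>e\<in>Y - X. insert e X \<in> Ind)"
  using assms unfolding matroid_def
  apply -
  apply (elim conjE, assumption)+
  done

lemma mat_fin_Ind: "matroid U Ind \<Longrightarrow> finite Ind"
  using matD(1,2) by (meson finite_Pow_iff rev_finite_subset)

lemma mat_fin_mem: "matroid U Ind \<Longrightarrow> Y \<in> Ind \<Longrightarrow> finite Y"
  using matD(1,2) by (meson PowD finite_subset subsetD)

lemma rank_set_fin: "matroid U Ind \<Longrightarrow> finite {card Y | Y. Y \<subseteq> X \<and> Y \<in> Ind}"
proof -
  assume m: "matroid U Ind"
  have "{card Y | Y. Y \<subseteq> X \<and> Y \<in> Ind} \<subseteq> card ` Ind" by blast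
  thus ?thesis using mat_fin_Ind[OF m] finite_surj by blast
qed

lemma rank_ge: "matroid U Ind \<Longrightarrow> Y \<subseteq> X \<Longrightarrow> Y \<in> Ind \<Longrightarrow> card Y \<le> mrank Ind X"
  unfolding mrank_def by (rule Max_ge[OF rank_set_fin]) auto

lemma rank_obtain: "matroid U Ind \<Longrightarrow> \<exists>Y. Y \<subseteq> X \<and> Y \<in> Ind \<and> card Y = mrank Ind X"
proof -
  assume m: "matroid U Ind"
  have e: "{} \<in> Ind" using matD(3)[OF m] .
  have ne: "card {} \<in> {card Y | Y. Y \<subseteq> X \<and> Y \<in> Ind}"
    by (rule CollectI, rule exI[of _ "{}"]) (simp add: e)
  have "mrank Ind X \<in> {card Y | Y. Y \<subseteq> X \<and> Y \<in> Ind}"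
    unfolding mrank_def by (rule Max_in[OF rank_set_fin[OF m]]) (use ne in \<open>rule ex_in_conv[THEN iffD1, OF exI]\<close>)
  thus ?thesis by auto
qed

lemma augment0: "matroid U Ind \<Longrightarrow> (\<forall>X Y. X \<in> Ind \<and> Y \<in> Ind \<and> card X < card Y \<longrightarrow> (\<exists>e\<in>Y - X. insert e X \<in> Ind))"
  using matD(5) by blast

lemma augment: "matroid U Ind \<Longrightarrow> X \<in> Ind \<Longrightarrow> Y \<in> Ind \<Longrightarrow> card X < card Y \<Longrightarrow> \<exists>e\<in>Y - X. insert e X \<in> Ind"
  using augment0 by blast

lemma subset_ind0: "matroid U Ind \<Longrightarrow> (\<forall>X Y. X \<in> Ind \<and> Y \<subseteq> X \<longrightarrow> Y \<in> Ind)"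
  using matD(4) by blast

lemma subset_ind: "matroid U Ind \<Longrightarrow> X \<in> Ind \<Longrightarrow> Y \<subseteq> X \<Longrightarrow> Y \<in> Ind"
  using subset_ind0 by blast

lemma rank_ind: "matroid U Ind \<Longrightarrow> P \<in> Ind \<Longrightarrow> mrank Ind P = card P"
proof -
  assume m: "matroid U Ind" and P: "P \<in> Ind"
  obtain Y where Y: "Y \<subseteq> P" "Y \<in> Ind" "card Y = mrank Ind P" using rank_obtain[OF m] by blast
  have "card Y \<le> card P" using Y(1) mat_fin_mem[OF m P] card_mono by blast
  moreover have "card P \<le> mrank Ind P" using rank_ge[OF m _ P] by blast
  ultimately show ?thesis using Y by linarith
qed

lemma span_ind: "matroid U Ind \<Longrightarrow> P \<in> Ind \<Longrightarrow> (e \<in> mspan Ind P) \<longleftrightarrow> (e \<in> P \<or> insert e P \<notin> Ind)"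
proof -
  assume m: "matroid U Ind" and P: "P \<in> Ind"
  have fP: "finite P" using mat_fin_mem[OF m P] .
  show ?thesis
  proof (cases "e \<in> P")
    case True
    then show ?thesis unfolding mspan_def by (simp add: insert_absorb)
  next
    case False
    show ?thesis
    proof (cases "insert e P \<in> Ind")
      case True
      have "mrank Ind (insert e P) = card P + 1"
        using rank_ind[OF m True] False fP by simp
      then show ?thesis using False True rank_ind[OF m P] unfolding mspan_def by simp
    next
      case nI: False
      obtain Y where Y: "Y \<subseteq> insert e P" "Y \<in> Ind" "card Y = mrank Ind (insert e P)"
        using rank_obtain[OF m] by blast
      have "\<not> card P < card Y"
      proof
        assume "card P < card Y"
        then obtain x where "x \<in> Y - P" "insert x P \<in> Ind" using augment[OF m P Y(2)] by blast
        with Y(1) nI show False by auto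
      qed
      moreover have "card P \<le> mrank Ind (insert e P)" using rank_ge[OF m _ P] by blast
      ultimately have "mrank Ind (insert e P) = mrank Ind P" using Y rank_ind[OF m P] by linarith
      then show ?thesis using nI False unfolding mspan_def by simp
    qed
  qed
qed

definition good :: "('a \<Rightarrow> real) \<Rightarrow> int set \<Rightarrow> 'a \<Rightarrow> bool" where
  "good val J e \<longleftrightarrow> val e > 0 \<and> log 2 (val e) \<in> real_of_int ` J"

lemma alg_inv:
  assumes m: "matroid U Ind"
  shows "let P = simple_alg Ind val J xs in P \<in> Ind \<and> P \<subseteq> set xs \<and> (\<forall>x\<in>P. good val J x)
      \<and> (\<forall>x\<in>set xs. good val J x \<longrightarrow> x \<in> P \<or> insert x P \<notin> Ind)"
proof (induction xs rule: rev_induct)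
  case Nil
  then show ?case using matD(3)[OF m] unfolding simple_alg_def by simp
next
  case (snoc x xs)
  define P where "P = simple_alg Ind val J xs"
  have IH: "P \<in> Ind" "P \<subseteq> set xs" "\<forall>x\<in>P. good val J x"
    "\<forall>x\<in>set xs. good val J x \<longrightarrow> x \<in> P \<or> insert x P \<notin> Ind"
    using snoc unfolding P_def Let_def by auto
  have eq: "simple_alg Ind val J (xs @ [x]) = simple_step Ind val J P x"
    unfolding simple_alg_def P_def by simp
  show ?case
  proof (cases "good val J x \<and> x \<notin> mspan Ind P")
    case True
    hence st: "simple_step Ind val J P x = insert x P"
      unfolding simple_step_def good_def by simp
    have xi: "insert x P \<in> Ind" using True span_ind[OF m IH(1)] by blast
    have "\<forall>y\<in>set xs. good val J y \<longrightarrow> y \<in> insert x P \<or> insert y (insert x P) \<notin> Ind"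
      using IH(4) subset_ind[OF m] by (metis insert_commute insert_iff subset_insertI)
    then show ?thesis unfolding eq st Let_def using xi IH True by auto
  next
    case False
    hence st: "simple_step Ind val J P x = P"
      unfolding simple_step_def good_def by auto
    have "good val J x \<longrightarrow> x \<in> P \<or> insert x P \<notin> Ind" using False span_ind[OF m IH(1)] by blast
    then show ?thesis unfolding eq st Let_def using IH by auto
  qed
qed

lemma good_iff: "good val J x \<longleftrightarrow> (\<exists>j\<in>J. val x = 2 powr real_of_int j)"
proof
  assume "good val J x"
  then obtain j where "j \<in> J" "val x > 0" "log 2 (val x) = real_of_int j" unfolding good_def by auto
  then show "\<exists>j\<in>J. val x = 2 powr real_of_int j" by (metis powr_log_cancel zero_less_numeral numeral_One numeral_eq_iff semiring_norm(85))
next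
  assume "\<exists>j\<in>J. val x = 2 powr real_of_int j"
  then show "good val J x" unfolding good_def by auto
qed

lemma buckets_good: "buckets val X J = {x\<in>X. good val J x}"
  unfolding buckets_def bucket_def good_iff by auto

theorem theorem1:
  fixes U :: "'a set" and Ind :: "'a set set" and val :: "'a \<Rightarrow> real"
    and F :: "'a set" and xs :: "'a list" and J :: "int set"
  assumes "matroid U Ind"
    and "\<And>e. e \<in> U \<Longrightarrow> mrank Ind {e} = 0 \<Longrightarrow> val e = 0"
    and "\<And>e. e \<in> U \<Longrightarrow> val e > 0 \<Longrightarrow> \<exists>i::int. val e = 2 powr (real_of_int i)"
    and "F \<subseteq> U"
    and "distinct xs" and "set xs = U - F"
  shows "simple_alg Ind val J xs \<in> Ind \<and> simple_alg Ind val J xs \<subseteq> U - F \<and>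
    OPT Ind val (simple_alg Ind val J xs) \<ge>
      (\<Sum>j\<in>{j \<in> J. bucket val (U - F) j \<noteq> {}}.
         2 powr (real_of_int j) *
         (real (mrank Ind (buckets val (U - F) (J - {j}) \<union> bucket val (U - F) j))
          - real (mrank Ind (buckets val (U - F) (J - {j})))))"
proof -
  note m = assms(1)
  define P where "P = simple_alg Ind val J xs"
  define B where "B = buckets val (U - F) J"
  define S where "S = {j \<in> J. bucket val (U - F) j \<noteq> {}}"
  have inv: "P \<in> Ind" "P \<subseteq> U - F" "\<forall>x\<in>P. good val J x"
    "\<forall>x\<in>U - F. good val J x \<longrightarrow> x \<in> P \<or> insert x P \<notin> Ind"
    using alg_inv[OF m, of val J xs] assms(6) unfolding P_def Let_def by auto
  have fU: "finite U" using matD(1)[OF m] .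
  have fP: "finite P" using mat_fin_mem[OF m inv(1)] .
  have PB: "P \<subseteq> B" using inv unfolding B_def buckets_good by auto
  have rB: "mrank Ind B = card P"
  proof -
    obtain Y where Y: "Y \<subseteq> B" "Y \<in> Ind" "card Y = mrank Ind B" using rank_obtain[OF m] by blast
    have "\<not> card P < card Y"
    proof
      assume "card P < card Y"
      then obtain x where "x \<in> Y - P" "insert x P \<in> Ind" using augment[OF m inv(1) Y(2)] by blast
      with Y(1) inv(4) show False unfolding B_def buckets_good by auto
    qed
    moreover have "card P \<le> mrank Ind B" using rank_ge[OF m PB inv(1)] .
    ultimately show ?thesis using Y by linarith
  qed
  have key: "real (mrank Ind (buckets val (U - F) (J - {j}) \<union> bucket val (U - F) j))
          - real (mrank Ind (buckets val (U - F) (J - {j}))) \<le> real (card (P \<inter> bucket val (U - F) j))"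
    if j: "j \<in> J" for j
  proof -
    have u: "buckets val (U - F) (J - {j}) \<union> bucket val (U - F) j = B"
      unfolding B_def buckets_def using j by blast
    have sub: "P - bucket val (U - F) j \<subseteq> buckets val (U - F) (J - {j})"
      using PB unfolding B_def buckets_def by blast
    have "card (P - bucket val (U - F) j) \<le> mrank Ind (buckets val (U - F) (J - {j}))"
      using rank_ge[OF m sub subset_ind[OF m inv(1)]] by blast
    moreover have "card P = card (P - bucket val (U - F) j) + card (P \<inter> bucket val (U - F) j)"
      using card_Int_Diff[OF fP, of "bucket val (U - F) j"] by linarith
    ultimately show ?thesis unfolding u rB by linarith
  qed
  have fS: "finite S"
  proof -
    have "S \<subseteq> (\<lambda>x. \<lfloor>log 2 (val x)\<rfloor>) ` U"
    proof
      fix j assume "j \<in> S"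
      then obtain x where "x \<in> U" "val x = 2 powr real_of_int j"
        unfolding S_def bucket_def by auto
      then show "j \<in> (\<lambda>x. \<lfloor>log 2 (val x)\<rfloor>) ` U" by force
    qed
    thus ?thesis using fU finite_surj by blast
  qed
  have UP: "(\<Union>j\<in>S. P \<inter> bucket val (U - F) j) = P"
  proof (rule equalityI)
    show "(\<Union>j\<in>S. P \<inter> bucket val (U - F) j) \<subseteq> P" by (rule UN_least) (rule Int_lower1)
    show "P \<subseteq> (\<Union>j\<in>S. P \<inter> bucket val (U - F) j)"
    proof
      fix x assume x: "x \<in> P"
      have g: "good val J x" using inv(3) x by (rule bspec)
      then obtain j where j: "j \<in> J" "val x = 2 powr real_of_int j" unfolding good_iff by (elim bexE)
      have xb: "x \<in> bucket val (U - F) j" using x inv(2) j(2) unfolding bucket_def by auto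
      hence "j \<in> S" unfolding S_def using j(1) by auto
      thus "x \<in> (\<Union>j\<in>S. P \<inter> bucket val (U - F) j)" using x xb by (intro UN_I IntI)
    qed
  qed
  have "(\<Sum>j\<in>S. 2 powr (real_of_int j) *
         (real (mrank Ind (buckets val (U - F) (J - {j}) \<union> bucket val (U - F) j))
          - real (mrank Ind (buckets val (U - F) (J - {j})))))
      \<le> (\<Sum>j\<in>S. 2 powr (real_of_int j) * real (card (P \<inter> bucket val (U - F) j)))"
    by (rule sum_mono, rule mult_left_mono) (use key S_def in auto)
  also have "\<dots> = (\<Sum>j\<in>S. sum val (P \<inter> bucket val (U - F) j))"
    by (rule sum.cong) (auto simp: bucket_def)
  also have "\<dots> = sum val (\<Union>j\<in>S. P \<inter> bucket val (U - F) j)"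
  proof (rule sum.UNION_disjoint[symmetric])
    show "finite S" by (rule fS)
    show "\<forall>i\<in>S. finite (P \<inter> bucket val (U - F) i)" using fP by blast
    show "\<forall>i\<in>S. \<forall>j\<in>S. i \<noteq> j \<longrightarrow> P \<inter> bucket val (U - F) i \<inter> (P \<inter> bucket val (U - F) j) = {}"
    proof (intro ballI impI)
      fix i j :: int assume "i \<noteq> j"
      hence "(2::real) powr real_of_int i \<noteq> 2 powr real_of_int j" by (simp add: powr_inj)
      thus "P \<inter> bucket val (U - F) i \<inter> (P \<inter> bucket val (U - F) j) = {}"
        unfolding bucket_def by auto
    qed
  qed
  also have "\<dots> = sum val P" using UP by simp
  also have "sum val P \<le> OPT Ind val P"
  proof -
    have "{sum val Y | Y. Y \<subseteq> P \<and> Y \<in> Ind} \<subseteq> sum val ` Pow P" by blast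
    hence fin: "finite {sum val Y | Y. Y \<subseteq> P \<and> Y \<in> Ind}"
      by (rule finite_subset) (intro finite_imageI, simp add: fP)
    have mem: "sum val P \<in> {sum val Y | Y. Y \<subseteq> P \<and> Y \<in> Ind}"
      by (rule CollectI, rule exI[of _ P]) (simp add: inv(1))
    show ?thesis unfolding OPT_def by (rule Max_ge[OF fin mem])
  qed
  finally have X: "(\<Sum>j\<in>S. 2 powr (real_of_int j) *
         (real (mrank Ind (buckets val (U - F) (J - {j}) \<union> bucket val (U - F) j))
          - real (mrank Ind (buckets val (U - F) (J - {j}))))) \<le> OPT Ind val P" .
  show ?thesis unfolding P_def[symmetric] S_def[symmetric] using inv(1,2) X by (intro conjI)
qed

end
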